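(* For every $n\ge4$, the function $f_n(x_1,\ldots,x_n)=x_1x_2\vee x_1x_3\vee\cdots\vee x_1x_{n-1}\vee x_2x_3\cdots x_n$ is a positive threshold function depending on all its variables, it is not linear read-once, and its specification number in $\mathcal{H}_n$ is $\sigma_{\mathcal{H}_n}(f_n)=n+1$.
   Context: $f$ on $\{0,1\}^n$ is positive if $f(\mathbf{x})=1$ and $\mathbf{x}\le\mathbf{y}$ coordinatewise imply $f(\mathbf{y})=1$. $f$ is a threshold function if there are $w_1,\ldots,w_n,t\in\mathbb{R}$ with $f(\mathbf{x})=0\iff\sum_iw_ix_i\le t$. $\mathcal{H}_n$ is the class of threshold functions of $n$ variables. A set $S\subseteq\{0,1\}^n$ specifies $f\in\mathcal{H}_n$ if $f$ is the only function in $\mathcal{H}_n$ agreeing with $f$ on $S$; $\sigma_{\mathcal{H}_n}(f)$ is the minimum size of such a set. Linear read-once (lro): constant or representable by a nested formula (literals are nested; $x\vee t$, $x\wedge t$, $\overline{x}\vee t$, $\overline{x}\wedge t$ are nested when $t$ is nested and contains neither $x$ nor $\overline{x}$). *)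

theory Defs
  imports Complex_Main
begin

text \<open>Points of the cube {0,1}^n are boolean lists of length n (True = 1).
  Variable x_(i+1) of the paper is the list position i.  A Boolean function of
  n variables is any f :: bool list => bool; only its values on the cube matter,
  and all notions below only look at the cube.\<close>

definition cube :: "nat \<Rightarrow> bool list set" where
  "cube n = {xs. length xs = n}"

definition positive_fn :: "nat \<Rightarrow> (bool list \<Rightarrow> bool) \<Rightarrow> bool" where
  "positive_fn n f \<longleftrightarrow> (\<forall>x\<in>cube n. \<forall>y\<in>cube n.
      f x \<and> (\<forall>i<n. x ! i \<longrightarrow> y ! i) \<longrightarrow> f y)"

definition threshold_fn :: "nat \<Rightarrow> (bool list \<Rightarrow> bool) \<Rightarrow> bool" where
  "threshold_fn n f \<longleftrightarrow> (\<exists>(w::nat \<Rightarrow> real) (t::real). \<forall>x\<in>cube n.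
      (\<not> f x \<longleftrightarrow> (\<Sum>i<n. w i * (if x ! i then 1 else 0)) \<le> t))"

definition depends_on_all :: "nat \<Rightarrow> (bool list \<Rightarrow> bool) \<Rightarrow> bool" where
  "depends_on_all n f \<longleftrightarrow> (\<forall>i<n. \<exists>x\<in>cube n. f x \<noteq> f (x[i := \<not> x ! i]))"

definition specifies :: "nat \<Rightarrow> bool list set \<Rightarrow> (bool list \<Rightarrow> bool) \<Rightarrow> bool" where
  "specifies n S f \<longleftrightarrow> S \<subseteq> cube n \<and>
     (\<forall>g. threshold_fn n g \<and> (\<forall>x\<in>S. g x = f x) \<longrightarrow> (\<forall>x\<in>cube n. g x = f x))"

definition spec_number :: "nat \<Rightarrow> (bool list \<Rightarrow> bool) \<Rightarrow> nat" where
  "spec_number n f = (LEAST k. \<exists>S. specifies n S f \<and> card S = k)"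

datatype nested = Lit nat bool | NOr nat bool nested | NAnd nat bool nested

fun nvars :: "nested \<Rightarrow> nat set" where
  "nvars (Lit i b) = {i}"
| "nvars (NOr i b t) = insert i (nvars t)"
| "nvars (NAnd i b t) = insert i (nvars t)"

fun nested_ok :: "nested \<Rightarrow> bool" where
  "nested_ok (Lit i b) = True"
| "nested_ok (NOr i b t) = (i \<notin> nvars t \<and> nested_ok t)"
| "nested_ok (NAnd i b t) = (i \<notin> nvars t \<and> nested_ok t)"

fun neval :: "nested \<Rightarrow> bool list \<Rightarrow> bool" where
  "neval (Lit i b) x = (x ! i = b)"
| "neval (NOr i b t) x = ((x ! i = b) \<or> neval t x)"
| "neval (NAnd i b t) x = ((x ! i = b) \<and> neval t x)"

definition lro :: "nat \<Rightarrow> (bool list \<Rightarrow> bool) \<Rightarrow> bool" where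
  "lro n f \<longleftrightarrow> (\<exists>c. \<forall>x\<in>cube n. f x = c) \<or>
     (\<exists>\<phi>. nested_ok \<phi> \<and> nvars \<phi> \<subseteq> {..<n} \<and> (\<forall>x\<in>cube n. f x = neval \<phi> x))"

definition fn :: "nat \<Rightarrow> bool list \<Rightarrow> bool" where
  "fn n x \<longleftrightarrow> (\<exists>j\<in>{1..n-2}. x ! 0 \<and> x ! j) \<or> (\<forall>j\<in>{1..n-1}. x ! j)"

end

theory Submission
  imports Defs
begin


definition S :: "nat \<Rightarrow> (nat \<Rightarrow> real) \<Rightarrow> bool list \<Rightarrow> real" where
  "S n w x = (\<Sum>i<n. w i * (if x ! i then 1 else 0))"

lemma threshold_alt: "threshold_fn n f \<longleftrightarrow> (\<exists>w t. \<forall>x\<in>cube n. (\<not> f x \<longleftrightarrow> S n w x \<le> t))"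
  unfolding threshold_fn_def S_def by simp

definition pt :: "nat \<Rightarrow> nat set \<Rightarrow> bool list" where
  "pt n A = map (\<lambda>i. i \<in> A) [0..<n]"

lemma pt_len[simp]: "length (pt n A) = n" by (simp add: pt_def)
lemma pt_nth[simp]: "i < n \<Longrightarrow> pt n A ! i = (i \<in> A)" by (simp add: pt_def)
lemma pt_cube[simp]: "pt n A \<in> cube n" by (simp add: cube_def)

lemma eq_pt_iff: "length y = n \<Longrightarrow> y = pt n A \<longleftrightarrow> (\<forall>i<n. y ! i = (i \<in> A))"
  by (auto simp: list_eq_iff_nth_eq)

lemma pt_inj: assumes "A \<subseteq> {..<n}" "B \<subseteq> {..<n}" shows "pt n A = pt n B \<longleftrightarrow> A = B"
proof -
  have "pt n A = pt n B \<longleftrightarrow> (\<forall>i<n. (i \<in> A) = (i \<in> B))" by (simp add: eq_pt_iff)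
  then show ?thesis using assms by blast
qed

lemma pt_upd: "i < n \<Longrightarrow> (pt n A)[i := b] = pt n (if b then insert i A else A - {i})"
  by (auto simp: list_eq_iff_nth_eq nth_list_update)

lemma fn_pt: "n \<ge> 2 \<Longrightarrow> fn n (pt n A) \<longleftrightarrow> (0 \<in> A \<and> (\<exists>j\<in>{1..n-2}. j \<in> A)) \<or> (\<forall>j\<in>{1..n-1}. j \<in> A)"
proof -
  assume n2: "n \<ge> 2"
  have a: "(\<exists>j\<in>{1..n-2}. pt n A ! j) = (\<exists>j\<in>{1..n-2}. j \<in> A)"
    by (rule bex_cong[OF refl]) (use n2 in auto)
  have b: "(\<forall>j\<in>{1..n-1}. pt n A ! j) = (\<forall>j\<in>{1..n-1}. j \<in> A)"
    by (rule ball_cong[OF refl]) (use n2 in auto)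
  show ?thesis unfolding fn_def using a b n2 by simp
qed

lemma S_pw:
  assumes "j < n" "\<forall>i<n. (if x!i then 1 else 0) + (if y!i then 1 else 0) =
     (if u!i then 1 else 0) + (if v!i then 1 else 0) + c * (if i = j then 1 else (0::real))"
  shows "S n w x + S n w y = S n w u + S n w v + c * w j"
proof -
  have "S n w x + S n w y = (\<Sum>i<n. w i * ((if x!i then 1 else 0) + (if y!i then 1 else 0)))"
    by (simp add: S_def sum.distrib[symmetric] distrib_left)
  also have "\<dots> = (\<Sum>i<n. w i * ((if u!i then 1 else 0) + (if v!i then 1 else 0)) + c * (w i * (if i = j then 1 else 0)))"
  proof (rule sum.cong[OF refl])
    fix i assume "i \<in> {..<n}"
    then have e: "(if x!i then 1 else 0) + (if y!i then 1 else 0) =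
     (if u!i then 1 else 0) + (if v!i then 1 else 0) + c * (if i = j then 1 else (0::real))" using assms(2) by auto
    show "w i * ((if x!i then 1 else 0) + (if y!i then 1 else 0)) = w i * ((if u!i then 1 else 0) + (if v!i then 1 else 0)) + c * (w i * (if i = j then 1 else 0))"
      unfolding e by (simp add: algebra_simps)
  qed
  also have "\<dots> = S n w u + S n w v + c * w j"
  proof -
    have "(\<Sum>i<n. w i * (if i = j then 1 else 0)) = (\<Sum>i<n. if i = j then w i else 0)"
      by (rule sum.cong) auto
    also have "\<dots> = w j" using assms(1) by simp
    finally show ?thesis by (simp add: S_def sum.distrib distrib_left sum_distrib_left[symmetric])
  qed
  finally show ?thesis .
qed

lemma S_mono:
  assumes "\<forall>i<n. x!i \<longrightarrow> y!i" "\<forall>i<n. y!i \<and> \<not> x!i \<longrightarrow> 0 \<le> w i"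
  shows "S n w x \<le> S n w y"
  unfolding S_def using assms by (intro sum_mono) auto

lemma S_empty[simp]: "S n w (pt n {}) = 0" by (simp add: S_def)

definition kk where "kk n j y = card {i\<in>{1..n-2}-{j}. y!i}"

context
  fixes n j :: nat
  assumes n4: "4 \<le> n" and j1: "1 \<le> j" and j2: "j \<le> n - 2"
begin

lemma split_all: "(\<forall>i<n. P i) \<longleftrightarrow> P 0 \<and> P j \<and> P (n-1) \<and> (\<forall>i\<in>{1..n-2}-{j}. P i)"
proof
  assume "\<forall>i<n. P i" then show "P 0 \<and> P j \<and> P (n-1) \<and> (\<forall>i\<in>{1..n-2}-{j}. P i)"
    using n4 j1 j2 by auto
next
  assume H: "P 0 \<and> P j \<and> P (n-1) \<and> (\<forall>i\<in>{1..n-2}-{j}. P i)"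
  show "\<forall>i<n. P i"
  proof (intro allI impI)
    fix i assume "i < n"
    then have "i = 0 \<or> i = j \<or> i = n-1 \<or> i \<in> {1..n-2}-{j}" by auto
    then show "P i" using H by auto
  qed
qed

lemma sum_split: "(\<Sum>i<n. h i) = h 0 + h j + h (n-1) + (\<Sum>i\<in>{1..n-2}-{j}. (h i :: real))"
proof -
  have e: "{..<n} = insert 0 (insert j (insert (n-1) ({1..n-2}-{j})))" using n4 j1 j2 by auto
  have f: "n-1 \<notin> {1..n-2}-{j}" "j \<notin> insert (n-1) ({1..n-2}-{j})"
     "0 \<notin> insert j (insert (n-1) ({1..n-2}-{j}))" using n4 j1 j2 by auto
  have "sum h (insert 0 (insert j (insert (n-1) ({1..n-2}-{j})))) = h 0 + sum h (insert j (insert (n-1) ({1..n-2}-{j})))"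
    by (rule sum.insert) (use f in auto)
  also have "sum h (insert j (insert (n-1) ({1..n-2}-{j}))) = h j + sum h (insert (n-1) ({1..n-2}-{j}))"
    by (rule sum.insert) (use f in auto)
  also have "sum h (insert (n-1) ({1..n-2}-{j})) = h (n-1) + sum h ({1..n-2}-{j})"
    by (rule sum.insert) (use f in auto)
  finally show ?thesis unfolding e by (simp add: algebra_simps)
qed

lemma card_B: "card ({1..n-2}-{j}) = n - 3"
  using n4 j1 j2 by (simp add: card_Diff_singleton)

lemma k_le: "kk n j y \<le> n - 3"
  unfolding kk_def card_B[symmetric] by (rule card_mono) auto

lemma k_pos: "(\<exists>i\<in>{1..n-2}-{j}. y!i) \<longleftrightarrow> 0 < kk n j y"
  unfolding kk_def by (auto simp: card_gt_0_iff)

lemma k_zero: "(\<forall>i\<in>{1..n-2}-{j}. \<not> y!i) \<longleftrightarrow> kk n j y = 0"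
  unfolding kk_def by auto

lemma k_full: "(\<forall>i\<in>{1..n-2}-{j}. y!i) \<longleftrightarrow> kk n j y = n - 3"
proof
  assume "\<forall>i\<in>{1..n-2}-{j}. y!i"
  then have "{i\<in>{1..n-2}-{j}. y!i} = {1..n-2}-{j}" by auto
  then show "kk n j y = n - 3" unfolding kk_def using card_B by simp
next
  assume "kk n j y = n - 3"
  then have "card {i\<in>{1..n-2}-{j}. y!i} = card ({1..n-2}-{j})" unfolding kk_def card_B .
  then have "{i\<in>{1..n-2}-{j}. y!i} = {1..n-2}-{j}" by (intro card_subset_eq) auto
  then show "\<forall>i\<in>{1..n-2}-{j}. y!i" by blast
qed

definition wf :: "real \<Rightarrow> real \<Rightarrow> real \<Rightarrow> real \<Rightarrow> nat \<Rightarrow> real" where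
  "wf a bj b c i = (if i = 0 then a else if i = n-1 then c else if i = j then bj else b)"

lemma sum_profile:
  "S n (wf a bj b c) y = a * (if y!0 then 1 else 0) + bj * (if y!j then 1 else 0)
     + b * real (kk n j y) + c * (if y!(n-1) then 1 else 0)"
proof -
  have "(\<Sum>i\<in>{1..n-2}-{j}. wf a bj b c i * (if y!i then 1 else 0))
      = (\<Sum>i\<in>{1..n-2}-{j}. b * (if y!i then 1 else 0))"
    by (rule sum.cong) (auto simp: wf_def)
  also have "\<dots> = b * real (kk n j y)"
  proof -
    have "{i\<in>{1..n-2}-{j}. y!i} = ({1..n-2}-{j}) \<inter> {i. y!i}" by auto
    then show ?thesis by (simp add: sum_distrib_left[symmetric] kk_def sum.If_cases)
  qed
  moreover have "j \<noteq> n-1" "j \<noteq> 0" "n - 1 \<noteq> 0" using n4 j1 j2 by auto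
  ultimately show ?thesis unfolding S_def sum_split by (simp add: wf_def)
qed

lemma fn_profile: assumes "length y = n"
  shows "fn n y \<longleftrightarrow> (y!0 \<and> (y!j \<or> 0 < kk n j y)) \<or> (y!j \<and> kk n j y = n - 3 \<and> y!(n-1))"
proof -
  have e1: "{1..n-2} = insert j ({1..n-2}-{j})" using j1 j2 by auto
  have e2: "{1..n-1} = insert j (insert (n-1) ({1..n-2}-{j}))" using j1 j2 n4 by auto
  show ?thesis unfolding fn_def
    apply (subst e1, subst e2)
    using k_pos[of y] k_full[of y] by auto
qed

lemma eq_pt_profile: assumes "length y = n"
  shows "y = pt n A \<longleftrightarrow> (y!0 = (0\<in>A)) \<and> (y!j = (j\<in>A)) \<and> (y!(n-1) = (n-1\<in>A))
          \<and> (\<forall>i\<in>{1..n-2}-{j}. y!i = (i\<in>A))"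
  using eq_pt_iff[OF assms] split_all by simp

end


lemma kcases: "k \<le> n - 3 \<Longrightarrow> 4 \<le> n \<Longrightarrow> (k = 0) \<or> (1 \<le> real k \<and> real k \<le> real n - 4 \<and> k \<noteq> 0 \<and> k \<noteq> n - 3) \<or> (k = n - 3 \<and> real k = real n - 3)"
  by (cases "k = 0"; cases "k = n - 3") (auto simp: of_nat_diff)

lemma ar_f: "k \<le> n-3 \<Longrightarrow> 4 \<le> n \<Longrightarrow> (\<not>((p \<and> (q \<or> 0<k)) \<or> (q \<and> k = n-3 \<and> r))) \<longleftrightarrow>
  (2*real n-5)*(if p then 1 else 0) + 2*(if q then 1 else 0) + 2*real k + 1*(if r then 1 else 0) \<le> 2*real n - 4"
  by (drule kcases, assumption, elim disjE; cases p; cases q; cases r) auto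

lemma ar_Q: "k \<le> n-3 \<Longrightarrow> 4 \<le> n \<Longrightarrow> (\<not>(if \<not>p \<and> q \<and> r \<and> k = n-3 then \<not>((p \<and> (q \<or> 0<k)) \<or> (q \<and> k = n-3 \<and> r)) else ((p \<and> (q \<or> 0<k)) \<or> (q \<and> k = n-3 \<and> r)))) \<longleftrightarrow>
  (real n-2)*(if p then 1 else 0) + 1*(if q then 1 else 0) + 1*real k + 0*(if r then 1 else 0) \<le> real n - 2"
  by (drule kcases, assumption, elim disjE; cases p; cases q; cases r) auto

lemma ar_R: "k \<le> n-3 \<Longrightarrow> 4 \<le> n \<Longrightarrow> (\<not>(if p \<and> \<not> q \<and> r \<and> k = 0 then \<not>((p \<and> (q \<or> 0<k)) \<or> (q \<and> k = n-3 \<and> r)) else ((p \<and> (q \<or> 0<k)) \<or> (q \<and> k = n-3 \<and> r)))) \<longleftrightarrow>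
  (2*real n-5)*(if p then 1 else 0) + 2*(if q then 1 else 0) + 2*real k + 2*(if r then 1 else 0) \<le> 2*real n - 4"
  by (drule kcases, assumption, elim disjE; cases p; cases q; cases r) auto

lemma ar_U: "k \<le> n-3 \<Longrightarrow> 4 \<le> n \<Longrightarrow> (\<not>(if \<not>p \<and> q \<and> \<not> r \<and> k = n-3 then \<not>((p \<and> (q \<or> 0<k)) \<or> (q \<and> k = n-3 \<and> r)) else ((p \<and> (q \<or> 0<k)) \<or> (q \<and> k = n-3 \<and> r)))) \<longleftrightarrow>
  (2*real n-5)*(if p then 1 else 0) + 2*(if q then 1 else 0) + 2*real k + 0*(if r then 1 else 0) \<le> 2*real n - 5"
  by (drule kcases, assumption, elim disjE; cases p; cases q; cases r) auto

lemma ar_P: "k \<le> n-3 \<Longrightarrow> 4 \<le> n \<Longrightarrow> (\<not>(if p \<and> q \<and> \<not> r \<and> k = 0 then \<not>((p \<and> (q \<or> 0<k)) \<or> (q \<and> k = n-3 \<and> r)) else ((p \<and> (q \<or> 0<k)) \<or> (q \<and> k = n-3 \<and> r)))) \<longleftrightarrow>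
  (2*real n-6)*(if p then 1 else 0) + 1*(if q then 1 else 0) + 2*real k + 1*(if r then 1 else 0) \<le> 2*real n - 5"
  by (drule kcases, assumption, elim disjE; cases p; cases q; cases r) auto



context
  fixes n j :: nat
  assumes n4: "4 \<le> n" and j1: "1 \<le> j" and j2: "j \<le> n - 2"
begin

lemma ball_B: "(\<forall>i\<in>{1..n-2}-{j}. y!i = (i\<in>A)) \<longleftrightarrow> (\<forall>i\<in>{1..n-2}-{j}. y!i = Q)"
  if "\<And>i. i\<in>{1..n-2}-{j} \<Longrightarrow> (i \<in> A) = Q" for A Q y
  by (rule ball_cong[OF refl]) (use that in auto)

lemma profQ: "length y = n \<Longrightarrow> y = pt n {1..n-1} \<longleftrightarrow> \<not>y!0 \<and> y!j \<and> y!(n-1) \<and> kk n j y = n-3"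
proof -
  assume l: "length y = n"
  have "(\<forall>i\<in>{1..n-2}-{j}. y!i = (i\<in>{1..n-1})) \<longleftrightarrow> (\<forall>i\<in>{1..n-2}-{j}. y!i = True)"
    by (rule ball_B) auto
  then show ?thesis using eq_pt_profile[OF n4 j1 j2 l, of "{1..n-1}"] k_full[OF n4 j1 j2, of y] n4 j1 j2 by auto
qed

lemma profU: "length y = n \<Longrightarrow> y = pt n {1..n-2} \<longleftrightarrow> \<not>y!0 \<and> y!j \<and> \<not> y!(n-1) \<and> kk n j y = n-3"
proof -
  assume l: "length y = n"
  have "(\<forall>i\<in>{1..n-2}-{j}. y!i = (i\<in>{1..n-2})) \<longleftrightarrow> (\<forall>i\<in>{1..n-2}-{j}. y!i = True)"
    by (rule ball_B) auto
  then show ?thesis using eq_pt_profile[OF n4 j1 j2 l, of "{1..n-2}"] k_full[OF n4 j1 j2, of y] n4 j1 j2 by auto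
qed

lemma profR: "length y = n \<Longrightarrow> y = pt n {0,n-1} \<longleftrightarrow> y!0 \<and> \<not> y!j \<and> y!(n-1) \<and> kk n j y = 0"
proof -
  assume l: "length y = n"
  have "(\<forall>i\<in>{1..n-2}-{j}. y!i = (i\<in>{0,n-1})) \<longleftrightarrow> (\<forall>i\<in>{1..n-2}-{j}. y!i = False)"
    by (rule ball_B) auto
  then show ?thesis using eq_pt_profile[OF n4 j1 j2 l, of "{0,n-1}"] k_zero[OF n4 j1 j2, of y] n4 j1 j2 by auto
qed

lemma profP: "length y = n \<Longrightarrow> y = pt n {0,j} \<longleftrightarrow> y!0 \<and> y!j \<and> \<not> y!(n-1) \<and> kk n j y = 0"
proof -
  assume l: "length y = n"
  have "(\<forall>i\<in>{1..n-2}-{j}. y!i = (i\<in>{0,j})) \<longleftrightarrow> (\<forall>i\<in>{1..n-2}-{j}. y!i = False)"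
    by (rule ball_B) auto
  then show ?thesis using eq_pt_profile[OF n4 j1 j2 l, of "{0,j}"] k_zero[OF n4 j1 j2, of y] n4 j1 j2 by auto
qed

lemma thr_P: "threshold_fn n (\<lambda>y. if y = pt n {0,j} then \<not> fn n y else fn n y)"
  unfolding threshold_alt
proof (intro exI ballI)
  fix y assume "y \<in> cube n"
  then have l: "length y = n" by (simp add: cube_def)
  show "(\<not> (if y = pt n {0,j} then \<not> fn n y else fn n y)) \<longleftrightarrow> S n (wf n j (2*real n-6) 1 2 1) y \<le> 2*real n - 5"
    unfolding profP[OF l] fn_profile[OF n4 j1 j2 l] sum_profile[OF n4 j1 j2]
    by (rule ar_P[OF k_le[OF n4 j1 j2] n4])
qed

end

context
  fixes n :: nat
  assumes n4: "4 \<le> n"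
begin

lemma j1: "(1::nat) \<le> 1" and j2: "1 \<le> n - 2" using n4 by auto

lemma thr_f: "threshold_fn n (fn n)"
  unfolding threshold_alt
proof (intro exI ballI)
  fix y assume "y \<in> cube n"
  then have l: "length y = n" by (simp add: cube_def)
  show "(\<not> fn n y) \<longleftrightarrow> S n (wf n 1 (2*real n-5) 2 2 1) y \<le> 2*real n - 4"
    unfolding fn_profile[OF n4 j1 j2 l] sum_profile[OF n4 j1 j2]
    by (rule ar_f[OF k_le[OF n4 j1 j2] n4])
qed

lemma thr_Q: "threshold_fn n (\<lambda>y. if y = pt n {1..n-1} then \<not> fn n y else fn n y)"
  unfolding threshold_alt
proof (intro exI ballI)
  fix y assume "y \<in> cube n"
  then have l: "length y = n" by (simp add: cube_def)
  show "(\<not> (if y = pt n {1..n-1} then \<not> fn n y else fn n y)) \<longleftrightarrow> S n (wf n 1 (real n-2) 1 1 0) y \<le> real n - 2"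
    unfolding profQ[OF n4 j1 j2 l] fn_profile[OF n4 j1 j2 l] sum_profile[OF n4 j1 j2]
    by (rule ar_Q[OF k_le[OF n4 j1 j2] n4])
qed

lemma thr_R: "threshold_fn n (\<lambda>y. if y = pt n {0,n-1} then \<not> fn n y else fn n y)"
  unfolding threshold_alt
proof (intro exI ballI)
  fix y assume "y \<in> cube n"
  then have l: "length y = n" by (simp add: cube_def)
  show "(\<not> (if y = pt n {0,n-1} then \<not> fn n y else fn n y)) \<longleftrightarrow> S n (wf n 1 (2*real n-5) 2 2 2) y \<le> 2*real n - 4"
    unfolding profR[OF n4 j1 j2 l] fn_profile[OF n4 j1 j2 l] sum_profile[OF n4 j1 j2]
    by (rule ar_R[OF k_le[OF n4 j1 j2] n4])
qed

lemma thr_U: "threshold_fn n (\<lambda>y. if y = pt n {1..n-2} then \<not> fn n y else fn n y)"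
  unfolding threshold_alt
proof (intro exI ballI)
  fix y assume "y \<in> cube n"
  then have l: "length y = n" by (simp add: cube_def)
  show "(\<not> (if y = pt n {1..n-2} then \<not> fn n y else fn n y)) \<longleftrightarrow> S n (wf n 1 (2*real n-5) 2 2 0) y \<le> 2*real n - 5"
    unfolding profU[OF n4 j1 j2 l] fn_profile[OF n4 j1 j2 l] sum_profile[OF n4 j1 j2]
    by (rule ar_U[OF k_le[OF n4 j1 j2] n4])
qed

end


definition E :: "nat \<Rightarrow> bool list set" where
  "E n = (\<lambda>j. pt n {0,j}) ` {1..n-2} \<union> {pt n {1..n-1}, pt n {0,n-1}, pt n {1..n-2}}"

context
  fixes n :: nat
  assumes n4: "4 \<le> n"
begin

lemma fvP: "j \<in> {1..n-2} \<Longrightarrow> fn n (pt n {0,j})" using n4 by (subst fn_pt) auto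
lemma fvQ: "fn n (pt n {1..n-1})" using n4 by (subst fn_pt) auto
lemma fvR: "\<not> fn n (pt n {0,n-1})"
proof -
  have "\<not> (\<forall>j\<in>{1..n-1}. j \<in> {0,n-1})" using n4 by (auto intro!: bexI[of _ 1])
  then show ?thesis using n4 by (subst fn_pt) auto
qed
lemma fvU: "\<not> fn n (pt n {1..n-2})"
proof -
  have "\<not> (\<forall>j\<in>{1..n-1}. j \<in> {1..n-2})" using n4 by (auto intro!: bexI[of _ "n-1"])
  then show ?thesis using n4 by (subst fn_pt) auto
qed
lemma fv1: "i < n \<Longrightarrow> \<not> fn n (pt n {i})"
proof -
  assume i: "i < n"
  have "\<not> (\<forall>j\<in>{1..n-1}. j \<in> {i})"
  proof
    assume "\<forall>j\<in>{1..n-1}. j \<in> {i}"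
    then have "1 = i" "2 = i" using n4 by auto
    then show False by simp
  qed
  then show ?thesis using n4 by (subst fn_pt) auto
qed
lemma fv0: "\<not> fn n (pt n {})" using n4 by (subst fn_pt) auto
lemma fvall: "fn n (pt n {..<n})" using n4 by (subst fn_pt) auto
lemma fvco: "i < n \<Longrightarrow> fn n (pt n ({..<n}-{i}))"
proof -
  assume i: "i < n"
  show ?thesis
  proof (cases "i = 0")
    case True then show ?thesis using n4 by (subst fn_pt) auto
  next
    case False
    then have "\<exists>j\<in>{1..n-2}. j \<in> {..<n}-{i}"
      using n4 by (cases "i = 1") (auto intro: bexI[of _ 1] bexI[of _ 2])
    then show ?thesis using n4 False by (subst fn_pt) auto
  qed
qed

lemma spec_E: "specifies n (E n) (fn n)"
  unfolding specifies_def
proof (intro conjI allI impI)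
  show "E n \<subseteq> cube n" by (auto simp: E_def)
  fix g assume "threshold_fn n g \<and> (\<forall>x\<in>E n. g x = fn n x)"
  then obtain w t where H: "\<forall>x\<in>cube n. (\<not> g x \<longleftrightarrow> S n w x \<le> t)" and A: "\<forall>x\<in>E n. g x = fn n x"
    unfolding threshold_alt by blast
  have gS: "\<And>x. x \<in> cube n \<Longrightarrow> g x \<longleftrightarrow> t < S n w x" using H by force
  have sP: "t < S n w (pt n {0,j})" if "j\<in>{1..n-2}" for j
    using gS[of "pt n {0,j}"] A fvP[OF that] that by (auto simp: E_def)
  have sQ: "t < S n w (pt n {1..n-1})"
    using gS[of "pt n {1..n-1}"] A fvQ by (auto simp: E_def)
  have sR: "S n w (pt n {0,n-1}) \<le> t"
    using gS[of "pt n {0,n-1}"] A fvR by (auto simp: E_def)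
  have sU: "S n w (pt n {1..n-2}) \<le> t"
    using gS[of "pt n {1..n-2}"] A fvU by (auto simp: E_def)
  have wM: "0 < w j" if j: "j\<in>{1..n-2}" for j
  proof -
    have "S n w (pt n {1..n-1}) + S n w (pt n {0,j}) = S n w (pt n {0,n-1}) + S n w (pt n {1..n-2}) + 1 * w j"
      by (rule S_pw) (use j n4 in auto)
    then show ?thesis using sP[OF j] sQ sR sU by simp
  qed
  have wL: "0 < w (n-1)"
  proof -
    have "S n w (pt n {1..n-1}) + S n w (pt n {}) = S n w (pt n {1..n-2}) + S n w (pt n {}) + 1 * w (n-1)"
      by (rule S_pw) (use n4 in auto)
    then show ?thesis using sQ sU by simp
  qed
  have w0: "0 \<le> w 0"
  proof -
    have "S n w (pt n {0,1}) + S n w (pt n {}) = S n w (pt n {1}) + S n w (pt n {}) + 1 * w 0"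
      by (rule S_pw) (use n4 in auto)
    moreover have "S n w (pt n {1}) \<le> S n w (pt n {1..n-2})"
      by (rule S_mono) (use n4 in \<open>auto intro!: less_imp_le[OF wM]\<close>)
    moreover have "t < S n w (pt n {0,1})" using sP[of 1] n4 by auto
    ultimately show ?thesis using sU by simp
  qed
  have wall: "\<forall>i<n. 0 \<le> w i"
  proof (intro allI impI)
    fix i assume i: "i < n"
    then have "i = 0 \<or> i = n - 1 \<or> i \<in> {1..n-2}" by auto
    then show "0 \<le> w i" using w0 wL wM by (auto intro: less_imp_le)
  qed
  show "\<forall>x\<in>cube n. g x = fn n x"
  proof
    fix y assume y: "y \<in> cube n"
    then have l: "length y = n" by (simp add: cube_def)
    show "g y = fn n y"
    proof (cases "fn n y")
      case True
      then have "(\<exists>j\<in>{1..n-2}. y!0 \<and> y!j) \<or> (\<forall>j\<in>{1..n-1}. y!j)" unfolding fn_def by auto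
      then have "t < S n w y"
      proof
        assume "\<exists>j\<in>{1..n-2}. y!0 \<and> y!j"
        then obtain j where j: "j\<in>{1..n-2}" "y!0" "y!j" by blast
        have "S n w (pt n {0,j}) \<le> S n w y"
          by (rule S_mono) (use j n4 wall in auto)
        then show ?thesis using sP[OF j(1)] by simp
      next
        assume a: "\<forall>j\<in>{1..n-1}. y!j"
        have "S n w (pt n {1..n-1}) \<le> S n w y"
          by (rule S_mono) (use a n4 wall in auto)
        then show ?thesis using sQ by simp
      qed
      then show ?thesis using gS[OF y] True by simp
    next
      case False
      then have F: "(\<not> y!0 \<or> (\<forall>j\<in>{1..n-2}. \<not> y!j)) \<and> (\<exists>j\<in>{1..n-1}. \<not> y!j)" unfolding fn_def by auto
      have "S n w y \<le> t"
      proof (cases "y!0")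
        case True
        then have a: "\<forall>j\<in>{1..n-2}. \<not> y!j" using F by auto
        have "S n w y \<le> S n w (pt n {0,n-1})"
        proof (rule S_mono)
          show "\<forall>i<n. y ! i \<longrightarrow> pt n {0, n - 1} ! i"
          proof (intro allI impI)
            fix i assume "i < n" "y!i"
            then show "pt n {0, n - 1} ! i" using a by (cases "i = 0 \<or> i = n-1") auto
          qed
        qed (use wall in auto)
        then show ?thesis using sR by simp
      next
        case False
        from F obtain j where j: "j\<in>{1..n-1}" "\<not> y!j" by blast
        show ?thesis
        proof (cases "j = n-1")
          case True
          have "S n w y \<le> S n w (pt n {1..n-2})"
          proof (rule S_mono)
            show "\<forall>i<n. y ! i \<longrightarrow> pt n {1..n-2} ! i"
            proof (intro allI impI)
              fix i assume "i < n" "y!i"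
              then show "pt n {1..n-2} ! i" using False True j by (cases "i = 0 \<or> i = n-1") auto
            qed
          qed (use wall in auto)
          then show ?thesis using sU by simp
        next
          case jn: False
          have jM: "j \<in> {1..n-2}" using j jn by auto
          have "S n w y \<le> S n w (pt n ({1..n-1}-{j}))"
          proof (rule S_mono)
            show "\<forall>i<n. y ! i \<longrightarrow> pt n ({1..n-1}-{j}) ! i"
            proof (intro allI impI)
              fix i assume "i < n" "y!i"
              then show "pt n ({1..n-1}-{j}) ! i" using False j by (cases "i = 0 \<or> i = j") auto
            qed
          qed (use wall in auto)
          moreover have "S n w (pt n ({1..n-1}-{j})) + S n w (pt n {0,j}) = S n w (pt n {0,n-1}) + S n w (pt n {1..n-2}) + 0 * w 0"
            by (rule S_pw) (use jM n4 in auto)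
          ultimately show ?thesis using sP[OF jM] sR sU by simp
        qed
      qed
      then show ?thesis using gS[OF y] False by simp
    qed
  qed
qed

end


lemma finite_cube: "finite (cube n)"
proof -
  have "finite {xs::bool list. set xs \<subseteq> UNIV \<and> length xs = n}" by (rule finite_lists_length_eq) simp
  then show ?thesis by (simp add: cube_def)
qed

context
  fixes n :: nat
  assumes n4: "4 \<le> n"
begin

lemma spec_min: assumes sp: "specifies n T (fn n)" shows "E n \<subseteq> T"
proof
  fix x assume xE: "x \<in> E n"
  show "x \<in> T"
  proof (rule ccontr)
    assume xT: "x \<notin> T"
    have thr: "threshold_fn n (\<lambda>y. if y = x then \<not> fn n y else fn n y)"
      using xE unfolding E_def
    proof (elim UnE imageE)
      fix j assume jj: "j \<in> {1..n-2}" and xj: "x = pt n {0,j}"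
      from jj have jb: "1 \<le> j" "j \<le> n - 2" by auto
      show ?thesis using thr_P[OF n4 jb] xj by (simp only:)
    next
      assume "x \<in> {pt n {1..n-1}, pt n {0,n-1}, pt n {1..n-2}}"
      then consider "x = pt n {1..n-1}" | "x = pt n {0,n-1}" | "x = pt n {1..n-2}" by blast
      then show ?thesis
      proof cases
        case 1 then show ?thesis using thr_Q[OF n4] by (simp only:)
      next
        case 2 then show ?thesis using thr_R[OF n4] by (simp only:)
      next
        case 3 then show ?thesis using thr_U[OF n4] by (simp only:)
      qed
    qed
    have "\<forall>y\<in>T. (if y = x then \<not> fn n y else fn n y) = fn n y" using xT by auto
    then have "\<forall>y\<in>cube n. (if y = x then \<not> fn n y else fn n y) = fn n y"
      using sp thr unfolding specifies_def by blast
    moreover have "x \<in> cube n" using xE by (auto simp: E_def)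
    ultimately show False by auto
  qed
qed

lemma card_E: "card (E n) = n + 1"
proof -
  have sub: "\<And>A. A \<subseteq> {..<n} \<Longrightarrow> A \<subseteq> {..<n}" by simp
  have inj: "inj_on (\<lambda>j. pt n {0,j}) {1..n-2}"
  proof
    fix a b assume a: "a \<in> {1..n-2}" and b: "b \<in> {1..n-2}" and e: "pt n {0,a} = pt n {0,b}"
    have "a < n" "b < n" using a b n4 by auto
    then have "{0,a} = {0,b}" using e pt_inj[of "{0,a}" n "{0,b}"] n4 by auto
    then have "a \<in> {0,b}" by blast
    then show "a = b" using a by auto
  qed
  have c1: "card ((\<lambda>j. pt n {0,j}) ` {1..n-2}) = n - 2" using inj by (simp add: card_image)
  have d1: "pt n {1..n-1} \<noteq> pt n {0,n-1}" "pt n {1..n-1} \<noteq> pt n {1..n-2}" "pt n {0,n-1} \<noteq> pt n {1..n-2}"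
  proof -
    have "pt n {1..n-1} ! 0 \<noteq> pt n {0,n-1} ! 0" using n4 by simp
    then show "pt n {1..n-1} \<noteq> pt n {0,n-1}" by metis
    have "pt n {1..n-1} ! (n-1) \<noteq> pt n {1..n-2} ! (n-1)" using n4 by (simp; linarith)
    then show "pt n {1..n-1} \<noteq> pt n {1..n-2}" by metis
    have "pt n {0,n-1} ! 0 \<noteq> pt n {1..n-2} ! 0" using n4 by simp
    then show "pt n {0,n-1} \<noteq> pt n {1..n-2}" by metis
  qed
  have c2: "card {pt n {1..n-1}, pt n {0,n-1}, pt n {1..n-2}} = 3" using d1 by simp
  have disj: "(\<lambda>j. pt n {0,j}) ` {1..n-2} \<inter> {pt n {1..n-1}, pt n {0,n-1}, pt n {1..n-2}} = {}"
  proof -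
    have "pt n {0,j} \<noteq> pt n {1..n-1}" "pt n {0,j} \<noteq> pt n {0,n-1}" "pt n {0,j} \<noteq> pt n {1..n-2}"
      if j: "j \<in> {1..n-2}" for j
    proof -
      have "pt n {0,j} ! 0 \<noteq> pt n {1..n-1} ! 0" using n4 by simp
      then show "pt n {0,j} \<noteq> pt n {1..n-1}" by metis
      have "pt n {0,j} ! (n-1) \<noteq> pt n {0,n-1} ! (n-1)" using n4 j by auto
      then show "pt n {0,j} \<noteq> pt n {0,n-1}" by metis
      have "pt n {0,j} ! 0 \<noteq> pt n {1..n-2} ! 0" using n4 by simp
      then show "pt n {0,j} \<noteq> pt n {1..n-2}" by metis
    qed
    then show ?thesis by (smt (verit) disjoint_iff imageE insertE empty_iff)
  qed
  have "card (E n) = (n - 2) + 3" unfolding E_def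
    by (subst card_Un_disjoint) (use disj c1 c2 in auto)
  then show ?thesis using n4 by simp
qed

lemma spec_number_eq: "spec_number n (fn n) = n + 1"
  unfolding spec_number_def
proof (rule Least_equality)
  show "\<exists>S. specifies n S (fn n) \<and> card S = n + 1" using spec_E[OF n4] card_E by blast
next
  fix k assume "\<exists>S. specifies n S (fn n) \<and> card S = k"
  then obtain T where T: "specifies n T (fn n)" "card T = k" by blast
  have "finite T" using T(1) finite_cube unfolding specifies_def by (auto intro: finite_subset)
  then have "card (E n) \<le> card T" using spec_min[OF T(1)] by (rule card_mono)
  then show "n + 1 \<le> k" using card_E T(2) by simp
qed

lemma positive: "positive_fn n (fn n)"
  unfolding positive_fn_def
proof (intro ballI impI)
  fix x y assume x: "x \<in> cube n" and y: "y \<in> cube n" and H: "fn n x \<and> (\<forall>i<n. x ! i \<longrightarrow> y ! i)"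
  then have le: "\<And>i. i < n \<Longrightarrow> x!i \<Longrightarrow> y!i" by auto
  from H have "(\<exists>j\<in>{1..n-2}. x ! 0 \<and> x ! j) \<or> (\<forall>j\<in>{1..n-1}. x ! j)" unfolding fn_def by simp
  then show "fn n y"
  proof
    assume "\<exists>j\<in>{1..n-2}. x ! 0 \<and> x ! j"
    then obtain j where "j\<in>{1..n-2}" "x!0" "x!j" by blast
    then have "j\<in>{1..n-2}" "y!0" "y!j" using le n4 by auto
    then show ?thesis unfolding fn_def by blast
  next
    assume "\<forall>j\<in>{1..n-1}. x ! j"
    then have "\<forall>j\<in>{1..n-1}. y ! j" using le n4 by auto
    then show ?thesis unfolding fn_def by blast
  qed
qed

lemma depends: "depends_on_all n (fn n)"
  unfolding depends_on_all_def
proof (intro allI impI)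
  fix i assume i: "i < n"
  consider "i = 0" | "i = n - 1" | "i \<in> {1..n-2}" using i by force
  then show "\<exists>x\<in>cube n. fn n x \<noteq> fn n (x[i := \<not> x ! i])"
  proof cases
    case 1
    have "pt n {1} ! i = False" using 1 i by simp
    moreover have "(pt n {1})[i := True] = pt n {0,1}" using 1 i by (simp add: pt_upd insert_commute)
    ultimately show ?thesis using fv1[OF n4, of 1] fvP[OF n4, of 1] n4 by (intro bexI[of _ "pt n {1}"]) auto
  next
    case 2
    have "pt n {1..n-2} ! i = False" using 2 i n4 by (simp; linarith)
    moreover have "(pt n {1..n-2})[i := True] = pt n {1..n-1}"
    proof -
      have "insert (n-1) {1..n-2} = {1..n-1}" using n4 by auto
      then show ?thesis using 2 i by (simp add: pt_upd)
    qed
    ultimately show ?thesis using fvU[OF n4] fvQ[OF n4] by (intro bexI[of _ "pt n {1..n-2}"]) auto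
  next
    case 3
    have "pt n {0} ! i = False" using 3 i by simp
    moreover have "(pt n {0})[i := True] = pt n {0,i}" using 3 i by (simp add: pt_upd insert_commute)
    ultimately show ?thesis using fv1[OF n4, of 0] fvP[OF n4 3] n4 by (intro bexI[of _ "pt n {0}"]) auto
  qed
qed

lemma not_lro: "\<not> lro n (fn n)"
  unfolding lro_def
proof
  assume "(\<exists>c. \<forall>x\<in>cube n. fn n x = c) \<or>
     (\<exists>\<phi>. nested_ok \<phi> \<and> nvars \<phi> \<subseteq> {..<n} \<and> (\<forall>x\<in>cube n. fn n x = neval \<phi> x))"
  then show False
  proof
    assume "\<exists>c. \<forall>x\<in>cube n. fn n x = c"
    then obtain c where "\<forall>x\<in>cube n. fn n x = c" by blast
    then have "fn n (pt n {}) = fn n (pt n {..<n})" by simp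
    then show False using fv0[OF n4] fvall[OF n4] by simp
  next
    assume "\<exists>\<phi>. nested_ok \<phi> \<and> nvars \<phi> \<subseteq> {..<n} \<and> (\<forall>x\<in>cube n. fn n x = neval \<phi> x)"
    then obtain \<phi> where sub: "nvars \<phi> \<subseteq> {..<n}" and ev: "\<forall>x\<in>cube n. fn n x = neval \<phi> x" by blast
    show False
    proof (cases \<phi>)
      case (Lit i b)
      then have i: "i < n" using sub by simp
      show False
      proof (cases b)
        case True
        then show False using ev[rule_format, of "pt n {i}"] fv1[OF n4 i] i Lit by simp
      next
        case False
        then show False using ev[rule_format, of "pt n {}"] fv0[OF n4] i Lit by simp
      qed
    next
      case (NOr i b t)
      then have i: "i < n" using sub by simp
      show False
      proof (cases b)
        case True
        then show False using ev[rule_format, of "pt n {i}"] fv1[OF n4 i] i NOr by simp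
      next
        case False
        then show False using ev[rule_format, of "pt n {}"] fv0[OF n4] i NOr by simp
      qed
    next
      case (NAnd i b t)
      then have i: "i < n" using sub by simp
      show False
      proof (cases b)
        case True
        then show False using ev[rule_format, of "pt n ({..<n}-{i})"] fvco[OF n4 i] i NAnd by simp
      next
        case False
        then show False using ev[rule_format, of "pt n {..<n}"] fvall[OF n4] i NAnd by simp
      qed
    qed
  qed
qed

end

theorem mainTheorem18:
  fixes n :: nat
  assumes "n \<ge> 4"
  shows "positive_fn n (fn n) \<and> threshold_fn n (fn n) \<and> depends_on_all n (fn n)
         \<and> \<not> lro n (fn n) \<and> spec_number n (fn n) = n + 1"
  using positive[OF assms] thr_f[OF assms] depends[OF assms] not_lro[OF assms] spec_number_eq[OF assms]
  by blast


end
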